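(* Let $G$ be a graph with adjacency matrix $A$, signless Laplacian $Q$, and maximum degree $\Delta$. (i) If $0\le\alpha\le1/2$, then $\rho(A_\alpha(G))\ge(1-\alpha)\rho(Q)+(2\alpha-1)\Delta$. If $G$ is connected and irregular, equality holds if and only if $\alpha=1/2$. (ii) If $1/2\le\alpha\le1$, then $\rho(A_\alpha(G))\ge\alpha\rho(Q)+(1-2\alpha)\rho(A)$. If $G$ is connected and irregular, equality holds if and only if $\alpha=1/2$.
   Context: For a graph $G$, $A(G)$ is the adjacency matrix, $D(G)$ the diagonal degree matrix, $Q(G)=D(G)+A(G)$ the signless Laplacian, and $A_\alpha(G)=\alpha D(G)+(1-\alpha)A(G)$ for $\alpha\in[0,1]$. $\rho(M)$ is the largest eigenvalue of a real symmetric matrix $M$. A graph is irregular if not all its vertices have the same degree. *)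

theory Defs
  imports "HOL-Analysis.Analysis"
begin

definition simple_graph :: "('n::finite \<Rightarrow> 'n \<Rightarrow> bool) \<Rightarrow> bool" where
  "simple_graph E \<longleftrightarrow> (\<forall>i j. E i j \<longrightarrow> E j i) \<and> (\<forall>i. \<not> E i i)"

definition degree :: "('n::finite \<Rightarrow> 'n \<Rightarrow> bool) \<Rightarrow> 'n \<Rightarrow> nat" where
  "degree E i = card {j. E i j}"

definition max_degree :: "('n::finite \<Rightarrow> 'n \<Rightarrow> bool) \<Rightarrow> nat" where
  "max_degree E = Max (range (degree E))"

definition connected_graph :: "('n::finite \<Rightarrow> 'n \<Rightarrow> bool) \<Rightarrow> bool" where
  "connected_graph E \<longleftrightarrow> (\<forall>i j. E\<^sup>*\<^sup>* i j)"

definition irregular :: "('n::finite \<Rightarrow> 'n \<Rightarrow> bool) \<Rightarrow> bool" where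
  "irregular E \<longleftrightarrow> (\<exists>i j. degree E i \<noteq> degree E j)"

definition adj_matrix :: "('n::finite \<Rightarrow> 'n \<Rightarrow> bool) \<Rightarrow> real^'n^'n" where
  "adj_matrix E = (\<chi> i j. if E i j then 1 else 0)"

definition deg_matrix :: "('n::finite \<Rightarrow> 'n \<Rightarrow> bool) \<Rightarrow> real^'n^'n" where
  "deg_matrix E = (\<chi> i j. if i = j then real (degree E i) else 0)"

definition signless_laplacian :: "('n::finite \<Rightarrow> 'n \<Rightarrow> bool) \<Rightarrow> real^'n^'n" where
  "signless_laplacian E = deg_matrix E + adj_matrix E"

definition A_alpha :: "real \<Rightarrow> ('n::finite \<Rightarrow> 'n \<Rightarrow> bool) \<Rightarrow> real^'n^'n" where
  "A_alpha \<alpha> E = \<alpha> *\<^sub>R deg_matrix E + (1 - \<alpha>) *\<^sub>R adj_matrix E"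

definition rho :: "real^'n^'n \<Rightarrow> real" where
  "rho M = Max {t. \<exists>v. v \<noteq> 0 \<and> M *v v = t *\<^sub>R v}"

end

theory Submission
  imports Defs
begin

definition symm :: "real^'n^'n \<Rightarrow> bool" where
  "symm M \<longleftrightarrow> (\<forall>i j. M$i$j = M$j$i)"

lemma symm_inner:
  assumes "symm M"
  shows "x \<bullet> (M *v y) = y \<bullet> (M *v x)"
proof -
  have "x \<bullet> (M *v y) = (\<Sum>i\<in>UNIV. \<Sum>j\<in>UNIV. x$i * M$i$j * y$j)"
    by (simp add: inner_vec_def matrix_vector_mult_def sum_distrib_left mult.assoc)
  also have "\<dots> = (\<Sum>j\<in>UNIV. \<Sum>i\<in>UNIV. x$i * M$i$j * y$j)" by (rule sum.swap)
  also have "\<dots> = y \<bullet> (M *v x)"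
    using assms by (simp add: symm_def inner_vec_def matrix_vector_mult_def sum_distrib_left mult_ac)
  finally show ?thesis .
qed

lemma max_eigvec:
  assumes "symm M" and le: "\<And>y. y \<bullet> (M *v y) \<le> l * (y \<bullet> y)"
    and eq: "x \<bullet> (M *v x) = l * (x \<bullet> x)"
  shows "M *v x = l *\<^sub>R x"
proof -
  define w where "w = M *v x - l *\<^sub>R x"
  define a where "a = w \<bullet> w"
  define c where "c = l * (w \<bullet> w) - w \<bullet> (M *v w)"
  have c0: "c \<ge> 0" using le[of w] by (simp add: c_def)
  have key: "2 * t * a \<le> t^2 * c" for t
  proof -
    have "(x + t *\<^sub>R w) \<bullet> (M *v (x + t *\<^sub>R w)) \<le> l * ((x + t *\<^sub>R w) \<bullet> (x + t *\<^sub>R w))"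
      by (rule le)
    moreover have "w \<bullet> (M *v x) = x \<bullet> (M *v w)" using symm_inner[OF assms(1)] by simp
    moreover have "w \<bullet> (M *v x) - l * (w \<bullet> x) = a"
      by (simp add: a_def w_def inner_diff_right inner_diff_left algebra_simps)
    ultimately show ?thesis using eq
      by (simp add: c_def inner_add_left inner_add_right algebra_simps power2_eq_square inner_commute)
  qed
  have "a = 0"
  proof (rule ccontr)
    assume "a \<noteq> 0"
    have apos: "a > 0" using \<open>a \<noteq> 0\<close> by (simp add: a_def)
    define t where "t = a/(c+1)"
    have k: "2 * t * a \<le> t^2 * c" by (rule key)
    have h1: "(2 * t * a) * (c+1)^2 \<le> (t^2 * c) * (c+1)^2" using k c0 by (simp add: mult_right_mono)
    have h2: "(2 * t * a) * (c+1)^2 = 2*a*a*(c+1)" using c0 by (simp add: t_def power2_eq_square field_simps)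
    have tc: "t * (c+1) = a" using c0 by (simp add: t_def)
    have h3: "(t^2 * c) * (c+1)^2 = c * (t*(c+1))^2" by (simp add: power_mult_distrib)
    have h4: "(t^2 * c) * (c+1)^2 = a*a*c" using h3 tc by (simp add: power2_eq_square)
    have "2*a*a*(c+1) \<le> a*a*c" using h1 h2 h4 by linarith
    hence "a * a * (c + 2) \<le> 0" by (simp add: algebra_simps)
    moreover have "a * a * (c + 2) > 0" using apos c0 by simp
    ultimately show False by linarith
  qed
  thus ?thesis by (simp add: a_def w_def)
qed

lemma eig_finite:
  assumes "symm M"
  shows "finite {t. \<exists>v. v \<noteq> 0 \<and> M *v v = t *\<^sub>R v}"
proof -
  define S where "S = {t. \<exists>v. v \<noteq> 0 \<and> M *v v = t *\<^sub>R v}"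
  define g where "g t = (SOME v. v \<noteq> 0 \<and> M *v v = t *\<^sub>R v)" for t
  have g: "g t \<noteq> 0 \<and> M *v g t = t *\<^sub>R g t" if "t \<in> S" for t
  proof -
    from that obtain v where "v \<noteq> 0 \<and> M *v v = t *\<^sub>R v" unfolding S_def by auto
    thus ?thesis unfolding g_def by (rule someI)
  qed
  have inj: "inj_on g S"
  proof (rule inj_onI)
    fix t s assume "t \<in> S" "s \<in> S" "g t = g s"
    have "t *\<^sub>R g t = s *\<^sub>R g t" "g t \<noteq> 0" using g[OF \<open>t \<in> S\<close>] g[OF \<open>s \<in> S\<close>] \<open>g t = g s\<close> by metis+
    thus "t = s" by (metis scaleR_cancel_right)
  qed
  have po: "pairwise orthogonal (g ` S)"
  proof (clarsimp simp: pairwise_def)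
    fix t s assume ts: "t \<in> S" "s \<in> S" "g t \<noteq> g s"
    hence "t \<noteq> s" by auto
    have "t * (g t \<bullet> g s) = (M *v g t) \<bullet> g s" using g[OF ts(1)] by simp
    also have "\<dots> = g s \<bullet> (M *v g t)" by (simp add: inner_commute)
    also have "\<dots> = g t \<bullet> (M *v g s)" by (rule symm_inner[OF assms])
    also have "\<dots> = s * (g t \<bullet> g s)" using g[OF ts(2)] by simp
    finally have "(t - s) * (g t \<bullet> g s) = 0" by (simp add: algebra_simps)
    with \<open>t \<noteq> s\<close> show "orthogonal (g t) (g s)" by (simp add: orthogonal_def)
  qed
  have "0 \<notin> g ` S" proof
    assume "0 \<in> g ` S" then obtain t where "t \<in> S" "g t = 0" by auto
    thus False using g by blast
  qed
  hence "independent (g ` S)" by (rule pairwise_orthogonal_independent[OF po])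
  hence "finite (g ` S)" using independent_bound by blast
  hence "finite S" using finite_imageD[OF _ inj] by simp
  thus ?thesis by (simp add: S_def)
qed


lemma rayleigh:
  assumes "symm M"
  shows "\<And>y. y \<bullet> (M *v y) \<le> rho M * (y \<bullet> y)"
    and "\<exists>u. u \<bullet> u = 1 \<and> u \<bullet> (M *v u) = rho M"
proof -
  define f where "f y = y \<bullet> (M *v y)" for y :: "real^'a"
  have c: "continuous_on (sphere 0 1) f" unfolding f_def
    by (intro continuous_on_inner continuous_on_id matrix_vector_mult_linear_continuous_on)
  have ne: "sphere (0::real^'a) 1 \<noteq> {}" by simp
  obtain u where u: "u \<in> sphere 0 1" "\<And>y. y \<in> sphere 0 1 \<Longrightarrow> f y \<le> f u"
    using continuous_attains_sup[OF compact_sphere ne c] by blast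
  define l where "l = f u"
  have uu: "u \<bullet> u = 1" using u(1) by (simp add: dot_square_norm)
  have le: "y \<bullet> (M *v y) \<le> l * (y \<bullet> y)" for y
  proof (cases "y = 0")
    case True thus ?thesis by simp
  next
    case False
    define z where "z = (1 / norm y) *\<^sub>R y"
    have "z \<in> sphere 0 1" using False by (simp add: z_def)
    hence "f z \<le> l" using u l_def by blast
    moreover have "f z = f y / (norm y)^2"
      by (simp add: z_def f_def matrix_vector_mult_scaleR power2_eq_square)
    moreover have "norm y > 0" using False by simp
    ultimately have "f y \<le> l * (norm y)^2" by (simp add: divide_le_eq)
    thus ?thesis by (simp add: f_def dot_square_norm)
  qed
  have Mu: "M *v u = l *\<^sub>R u"
    by (rule max_eigvec[OF assms le]) (simp add: uu l_def f_def)
  have "rho M = l"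
    unfolding rho_def
  proof (rule Max_eqI)
    show "finite {t. \<exists>v. v \<noteq> 0 \<and> M *v v = t *\<^sub>R v}" by (rule eig_finite[OF assms])
    show "l \<in> {t. \<exists>v. v \<noteq> 0 \<and> M *v v = t *\<^sub>R v}" using Mu uu by (auto intro!: exI[of _ u])
    fix t assume "t \<in> {t. \<exists>v. v \<noteq> 0 \<and> M *v v = t *\<^sub>R v}"
    then obtain v where v: "v \<noteq> 0" "M *v v = t *\<^sub>R v" by auto
    have "t * (v \<bullet> v) \<le> l * (v \<bullet> v)" using le[of v] v by simp
    moreover have "v \<bullet> v > 0" using v by simp
    ultimately show "t \<le> l" by simp
  qed
  thus "\<And>y. y \<bullet> (M *v y) \<le> rho M * (y \<bullet> y)" using le by simp
  show "\<exists>u. u \<bullet> u = 1 \<and> u \<bullet> (M *v u) = rho M"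
    using uu \<open>rho M = l\<close> l_def f_def by auto
qed

lemma symm_adj: "simple_graph E \<Longrightarrow> symm (adj_matrix E)"
  by (auto simp: symm_def adj_matrix_def simple_graph_def)
lemma symm_deg: "symm (deg_matrix E)"
  by (auto simp: symm_def deg_matrix_def)
lemma symm_comb: "symm M \<Longrightarrow> symm N \<Longrightarrow> symm (a *\<^sub>R M + b *\<^sub>R N)"
  by (simp add: symm_def)
lemma symm_add: "symm M \<Longrightarrow> symm N \<Longrightarrow> symm (M + N)"
  by (simp add: symm_def)

lemma deg_mult: "deg_matrix E *v y = (\<chi> i. real (degree E i) * y$i)"
proof -
  have "(\<Sum>j\<in>UNIV. (if i = j then real (degree E i) else 0) * y$j) = real (degree E i) * y$i" for i
    by (simp add: if_distrib[of "\<lambda>t. t * _"] cong: if_cong)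
  thus ?thesis by (simp add: deg_matrix_def matrix_vector_mult_def vec_eq_iff)
qed

lemma adj_mult: "(adj_matrix E *v y)$i = (\<Sum>j\<in>UNIV. (if E i j then 1 else 0) * y$j)"
  by (simp add: adj_matrix_def matrix_vector_mult_def)

lemma deg_le_max: "degree E i \<le> max_degree E"
  unfolding max_degree_def by (rule Max_ge) auto

lemma qf_deg: "y \<bullet> (deg_matrix E *v y) = (\<Sum>i\<in>UNIV. real (degree E i) * (y$i)^2)"
  by (simp add: deg_mult inner_vec_def power2_eq_square mult_ac)

lemma qf_Aalpha: "y \<bullet> (A_alpha a E *v y) = a * (y \<bullet> (deg_matrix E *v y)) + (1 - a) * (y \<bullet> (adj_matrix E *v y))"
  unfolding A_alpha_def matrix_vector_mult_add_rdistrib inner_add_right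
    scaleR_matrix_vector_assoc[symmetric] inner_scaleR_right ..

lemma qf_Q: "y \<bullet> (signless_laplacian E *v y) = y \<bullet> (deg_matrix E *v y) + y \<bullet> (adj_matrix E *v y)"
  by (simp add: signless_laplacian_def matrix_vector_mult_add_rdistrib inner_add_right)

definition vabs :: "real^'n \<Rightarrow> real^'n" where "vabs x = (\<chi> i. \<bar>x$i\<bar>)"

lemma vabs_inner: "vabs x \<bullet> vabs x = x \<bullet> x"
  by (simp add: vabs_def inner_vec_def)

lemma vabs_qf:
  assumes "\<And>i j. M$i$j \<ge> 0"
  shows "x \<bullet> (M *v x) \<le> vabs x \<bullet> (M *v vabs x)"
proof -
  have "x \<bullet> (M *v x) = (\<Sum>i\<in>UNIV. \<Sum>j\<in>UNIV. x$i * M$i$j * x$j)"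
    by (simp add: inner_vec_def matrix_vector_mult_def sum_distrib_left mult.assoc)
  also have "\<dots> \<le> (\<Sum>i\<in>UNIV. \<Sum>j\<in>UNIV. \<bar>x$i\<bar> * M$i$j * \<bar>x$j\<bar>)"
  proof (intro sum_mono)
    fix i j
    have "x$i * M$i$j * x$j \<le> \<bar>x$i * M$i$j * x$j\<bar>" by simp
    also have "\<dots> = \<bar>x$i\<bar> * M$i$j * \<bar>x$j\<bar>" using assms[of i j] by (simp add: abs_mult)
    finally show "x$i * M$i$j * x$j \<le> \<bar>x$i\<bar> * M$i$j * \<bar>x$j\<bar>" .
  qed
  also have "\<dots> = vabs x \<bullet> (M *v vabs x)"
    by (simp add: vabs_def inner_vec_def matrix_vector_mult_def sum_distrib_left mult.assoc)
  finally show ?thesis .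
qed

lemma Q_nonneg: "signless_laplacian E $ i $ j \<ge> 0"
  by (simp add: signless_laplacian_def deg_matrix_def adj_matrix_def)

lemma positivity:
  assumes sg: "simple_graph E" and con: "connected_graph E"
    and nn: "\<And>i. y$i \<ge> 0" and nz: "y \<noteq> 0" and ev: "adj_matrix E *v y = m *\<^sub>R y"
  shows "y$k > 0"
proof -
  obtain i where "y$i \<noteq> 0" using nz by (metis vec_eq_iff zero_index)
  with nn have yi: "y$i > 0" by (simp add: order_less_le)
  have "E\<^sup>*\<^sup>* i k" using con by (simp add: connected_graph_def)
  thus ?thesis
  proof (induction rule: rtranclp_induct)
    case base thus ?case by (rule yi)
  next
    case (step k k')
    have "E k' k" using step.hyps(2) sg by (simp add: simple_graph_def)
    have "y$k = (if E k' k then 1 else 0) * y$k" using \<open>E k' k\<close> by simp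
    also have "\<dots> \<le> (\<Sum>j\<in>UNIV. (if E k' j then 1 else 0) * y$j)"
      by (rule member_le_sum[where f="\<lambda>j. (if E k' j then 1 else 0) * y$j"]) (simp_all add: nn)
    also have "\<dots> = (adj_matrix E *v y)$k'" by (simp add: adj_mult)
    also have "\<dots> = m * y$k'" using ev by simp
    finally have "m * y$k' > 0" using step.IH by linarith
    hence "y$k' \<noteq> 0" by auto
    with nn show ?case by (simp add: order_less_le)
  qed
qed

theorem proposition11:
  fixes E :: "'n::finite \<Rightarrow> 'n \<Rightarrow> bool" and \<alpha> :: real
  assumes "simple_graph E"
  shows "(0 \<le> \<alpha> \<and> \<alpha> \<le> 1/2 \<longrightarrow>
            rho (A_alpha \<alpha> E) \<ge> (1 - \<alpha>) * rho (signless_laplacian E) + (2*\<alpha> - 1) * real (max_degree E)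
          \<and> (connected_graph E \<and> irregular E \<longrightarrow>
               (rho (A_alpha \<alpha> E) = (1 - \<alpha>) * rho (signless_laplacian E) + (2*\<alpha> - 1) * real (max_degree E)
                \<longleftrightarrow> \<alpha> = 1/2)))
       \<and> (1/2 \<le> \<alpha> \<and> \<alpha> \<le> 1 \<longrightarrow>
            rho (A_alpha \<alpha> E) \<ge> \<alpha> * rho (signless_laplacian E) + (1 - 2*\<alpha>) * rho (adj_matrix E)
          \<and> (connected_graph E \<and> irregular E \<longrightarrow>
               (rho (A_alpha \<alpha> E) = \<alpha> * rho (signless_laplacian E) + (1 - 2*\<alpha>) * rho (adj_matrix E)
                \<longleftrightarrow> \<alpha> = 1/2)))"
proof -
  note sg = assms
  define D where "D = deg_matrix E"
  define A where "A = adj_matrix E"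
  define Q where "Q = signless_laplacian E"
  define M where "M = A_alpha \<alpha> E"
  define \<Delta> where "\<Delta> = real (max_degree E)"
  have sA: "symm A" using symm_adj[OF sg] by (simp add: A_def)
  have sD: "symm D" by (simp add: D_def symm_deg)
  have sQ: "symm Q" unfolding Q_def signless_laplacian_def using symm_add[OF symm_deg symm_adj[OF sg]] .
  have sM: "symm M" unfolding M_def A_alpha_def using symm_comb[OF symm_deg symm_adj[OF sg]] .
  have qM: "\<And>x. x \<bullet> (M *v x) = \<alpha> * (x \<bullet> (D *v x)) + (1 - \<alpha>) * (x \<bullet> (A *v x))"
    by (simp add: M_def D_def A_def qf_Aalpha)
  have qQ: "\<And>x. x \<bullet> (Q *v x) = x \<bullet> (D *v x) + x \<bullet> (A *v x)"
    by (simp add: Q_def D_def A_def qf_Q)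
  have qD: "\<And>x. x \<bullet> (D *v x) \<le> \<Delta> * (x \<bullet> x)"
  proof -
    fix x :: "real^'n"
    have "x \<bullet> (D *v x) = (\<Sum>i\<in>UNIV. real (degree E i) * (x$i)^2)" by (simp add: D_def qf_deg)
    also have "\<dots> \<le> (\<Sum>i\<in>UNIV. \<Delta> * (x$i)^2)"
      by (rule sum_mono) (simp add: \<Delta>_def deg_le_max mult_right_mono)
    also have "\<dots> = \<Delta> * (x \<bullet> x)" by (simp add: inner_vec_def sum_distrib_left power2_eq_square)
    finally show "x \<bullet> (D *v x) \<le> \<Delta> * (x \<bullet> x)" .
  qed
  (* Perron-type nonnegative maximizer for Q *)
  obtain u where u: "u \<bullet> u = 1" "u \<bullet> (Q *v u) = rho Q" using rayleigh(2)[OF sQ] by blast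
  define y where "y = vabs u"
  have yy: "y \<bullet> y = 1" using u by (simp add: y_def vabs_inner)
  have "u \<bullet> (Q *v u) \<le> y \<bullet> (Q *v y)" unfolding y_def Q_def by (rule vabs_qf[OF Q_nonneg])
  hence "rho Q \<le> y \<bullet> (Q *v y)" using u(2) by simp
  moreover have "y \<bullet> (Q *v y) \<le> rho Q" using rayleigh(1)[OF sQ, of y] yy by simp
  ultimately have yQ: "y \<bullet> (Q *v y) = rho Q" by simp
  have ynn: "\<And>i. y$i \<ge> 0" by (simp add: y_def vabs_def)
  have ynz: "y \<noteq> 0" using yy by auto
  have Qy: "Q *v y = rho Q *\<^sub>R y"
    by (rule max_eigvec[OF sQ rayleigh(1)[OF sQ]]) (simp add: yQ yy)
  define a where "a = y \<bullet> (D *v y)"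
  define b where "b = y \<bullet> (A *v y)"
  have ab: "a + b = rho Q" using qQ[of y] yQ by (simp add: a_def b_def)
  have aD: "a \<le> \<Delta>" using qD[of y] yy by (simp add: a_def)
  have bA: "b \<le> rho A" using rayleigh(1)[OF sA, of y] yy by (simp add: b_def)
  have yM: "y \<bullet> (M *v y) \<le> rho M" using rayleigh(1)[OF sM, of y] yy by simp
  have yMab: "y \<bullet> (M *v y) = \<alpha> * a + (1 - \<alpha>) * b" using qM[of y] by (simp add: a_def b_def)
  have half: "rho M = (1/2) * rho Q" if "\<alpha> = 1/2"
  proof -
    obtain z where z: "z \<bullet> z = 1" "z \<bullet> (M *v z) = rho M" using rayleigh(2)[OF sM] by blast
    have "rho M = (1/2) * (z \<bullet> (Q *v z))" using z(2) qM[of z] qQ[of z] that by simp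
    also have "\<dots> \<le> (1/2) * rho Q" using rayleigh(1)[OF sQ, of z] z(1) by simp
    finally have "rho M \<le> (1/2) * rho Q" .
    moreover have "(1/2) * rho Q \<le> rho M" using yM yMab ab that by simp
    ultimately show ?thesis by simp
  qed
  (* a vector positive everywhere with D y = c y contradicts irregularity *)
  have noirr: False if irr: "irregular E" and con: "connected_graph E" and Dy: "D *v y = c *\<^sub>R y" for c
  proof -
    have Ay: "A *v y = (rho Q - c) *\<^sub>R y"
    proof -
      have "Q = D + A" by (simp add: Q_def D_def A_def signless_laplacian_def)
      hence "A *v y = Q *v y - D *v y" by (simp add: matrix_vector_mult_add_rdistrib)
      thus ?thesis using Qy Dy by (simp add: scaleR_diff_left)
    qed
    have Ay': "adj_matrix E *v y = (rho Q - c) *\<^sub>R y" using Ay by (simp add: A_def)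
    have pos: "\<And>k. y$k > 0" by (rule positivity[OF sg con ynn ynz Ay'])
    have "real (degree E k) = c" for k
    proof -
      have "real (degree E k) * y$k = c * y$k" using arg_cong[OF Dy, of "\<lambda>v. v$k"] by (simp add: D_def deg_mult)
      thus ?thesis using pos[of k] by simp
    qed
    hence "degree E i = degree E j" for i j by (metis of_nat_eq_iff)
    thus False using irr by (simp add: irregular_def)
  qed
  show ?thesis
  proof (intro conjI impI)
    assume h: "0 \<le> \<alpha> \<and> \<alpha> \<le> 1/2"
    have low: "(1 - \<alpha>) * rho Q + (2*\<alpha> - 1) * \<Delta> \<le> (1 - \<alpha>) * rho Q + (2*\<alpha> - 1) * a"
      using aD h by (simp add: mult_left_mono_neg)
    have "b = rho Q - a" using ab by simp
    hence "y \<bullet> (M *v y) = \<alpha> * a + (1 - \<alpha>) * (rho Q - a)" using yMab by simp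
    also have "\<dots> = (1 - \<alpha>) * rho Q + (2*\<alpha> - 1) * a" by (simp add: algebra_simps)
    finally have eqa: "y \<bullet> (M *v y) = (1 - \<alpha>) * rho Q + (2*\<alpha> - 1) * a" .
    show "(1 - \<alpha>) * rho (signless_laplacian E) + (2*\<alpha> - 1) * real (max_degree E) \<le> rho (A_alpha \<alpha> E)"
      using low eqa yM by (simp add: Q_def M_def \<Delta>_def)
    assume ci: "connected_graph E \<and> irregular E"
    show "rho (A_alpha \<alpha> E) = (1 - \<alpha>) * rho (signless_laplacian E) + (2*\<alpha> - 1) * real (max_degree E) \<longleftrightarrow> \<alpha> = 1/2"
    proof
      assume ah: "\<alpha> = 1/2"
      have rM: "rho M = 1/2 * rho Q" by (rule half[OF ah])
      show "rho (A_alpha \<alpha> E) = (1 - \<alpha>) * rho (signless_laplacian E) + (2*\<alpha> - 1) * real (max_degree E)"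
        using rM unfolding M_def Q_def ah by simp
    next
      assume eq: "rho (A_alpha \<alpha> E) = (1 - \<alpha>) * rho (signless_laplacian E) + (2*\<alpha> - 1) * real (max_degree E)"
      show "\<alpha> = 1/2"
      proof (rule ccontr)
        assume ne: "\<alpha> \<noteq> 1/2"
        have "(2*\<alpha> - 1) * a \<le> (2*\<alpha> - 1) * \<Delta>" using eq eqa yM by (simp add: Q_def M_def \<Delta>_def)
        moreover have "2*\<alpha> - 1 < 0" using h ne by simp
        ultimately have "\<Delta> \<le> a" by simp
        hence aeq: "a = \<Delta>" using aD by simp
        have "(\<Sum>i\<in>UNIV. (\<Delta> - real (degree E i)) * (y$i)^2) = \<Delta> * (y \<bullet> y) - a"
        proof -
          have "(\<Sum>i\<in>UNIV. (\<Delta> - real (degree E i)) * (y$i)^2) = \<Delta> * (\<Sum>i\<in>UNIV. (y$i)^2) - (\<Sum>i\<in>UNIV. real (degree E i) * (y$i)^2)"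
            by (simp add: left_diff_distrib sum_subtractf sum_distrib_left)
          moreover have "(\<Sum>i\<in>UNIV. (y$i)^2) = y \<bullet> y" by (simp add: inner_vec_def power2_eq_square)
          moreover have "(\<Sum>i\<in>UNIV. real (degree E i) * (y$i)^2) = a" by (simp add: a_def D_def qf_deg)
          ultimately show ?thesis by simp
        qed
        hence "(\<Sum>i\<in>UNIV. (\<Delta> - real (degree E i)) * (y$i)^2) = 0" using aeq yy by simp
        moreover have "\<And>i. 0 \<le> (\<Delta> - real (degree E i)) * (y$i)^2"
          by (simp add: \<Delta>_def deg_le_max)
        ultimately have z: "\<And>i. (\<Delta> - real (degree E i)) * (y$i)^2 = 0"
          using sum_nonneg_eq_0_iff[of UNIV "\<lambda>i. (\<Delta> - real (degree E i)) * (y$i)^2"] by simp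
        have "D *v y = \<Delta> *\<^sub>R y"
        proof -
          have "real (degree E i) * y$i = \<Delta> * y$i" for i
            using z[of i] by (cases "y$i = 0") auto
          thus ?thesis by (simp add: D_def deg_mult vec_eq_iff)
        qed
        thus False using noirr ci by blast
      qed
    qed
  next
    assume h: "1/2 \<le> \<alpha> \<and> \<alpha> \<le> 1"
    have low: "\<alpha> * rho Q + (1 - 2*\<alpha>) * rho A \<le> \<alpha> * rho Q + (1 - 2*\<alpha>) * b"
      using bA h by (simp add: mult_left_mono_neg)
    have "a = rho Q - b" using ab by simp
    hence "y \<bullet> (M *v y) = \<alpha> * (rho Q - b) + (1 - \<alpha>) * b" using yMab by simp
    also have "\<dots> = \<alpha> * rho Q + (1 - 2*\<alpha>) * b" by (simp add: algebra_simps)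
    finally have eqb: "y \<bullet> (M *v y) = \<alpha> * rho Q + (1 - 2*\<alpha>) * b" .
    show "\<alpha> * rho (signless_laplacian E) + (1 - 2*\<alpha>) * rho (adj_matrix E) \<le> rho (A_alpha \<alpha> E)"
      using low eqb yM by (simp add: Q_def M_def A_def)
    assume ci: "connected_graph E \<and> irregular E"
    show "rho (A_alpha \<alpha> E) = \<alpha> * rho (signless_laplacian E) + (1 - 2*\<alpha>) * rho (adj_matrix E) \<longleftrightarrow> \<alpha> = 1/2"
    proof
      assume ah: "\<alpha> = 1/2"
      have rM: "rho M = 1/2 * rho Q" by (rule half[OF ah])
      show "rho (A_alpha \<alpha> E) = \<alpha> * rho (signless_laplacian E) + (1 - 2*\<alpha>) * rho (adj_matrix E)"
        using rM unfolding M_def Q_def ah by simp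
    next
      assume eq: "rho (A_alpha \<alpha> E) = \<alpha> * rho (signless_laplacian E) + (1 - 2*\<alpha>) * rho (adj_matrix E)"
      show "\<alpha> = 1/2"
      proof (rule ccontr)
        assume ne: "\<alpha> \<noteq> 1/2"
        have "(1 - 2*\<alpha>) * b \<le> (1 - 2*\<alpha>) * rho A" using eq eqb yM by (simp add: Q_def M_def A_def)
        moreover have "1 - 2*\<alpha> < 0" using h ne by simp
        ultimately have "rho A \<le> b" by simp
        hence beq: "b = rho A" using bA by simp
        have Ay: "A *v y = rho A *\<^sub>R y"
          by (rule max_eigvec[OF sA rayleigh(1)[OF sA]]) (use beq yy in \<open>simp add: b_def\<close>)
        have "Q = D + A" by (simp add: Q_def D_def A_def signless_laplacian_def)
        hence "D *v y = Q *v y - A *v y" by (simp add: matrix_vector_mult_add_rdistrib)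
        hence "D *v y = (rho Q - rho A) *\<^sub>R y" using Qy Ay by (simp add: scaleR_diff_left)
        thus False using noirr ci by blast
      qed
    qed
  qed
qed

end
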